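(* The Brennan conjecture holds for univalent rational functions: for every $R\in\mathcal{U}_R$ and every $\tau\le-2$ one has $\beta_R(\tau)\le|\tau|-1$; in particular $\beta_R(-2)\le1$ for all $R\in\mathcal{U}_R$, and $\sup_{R\in\mathcal{U}_R}\beta_R(-2)=1$.
   Context: $\Delta$ is the unit disk. $\mathcal{U}_R$ is the class of rational functions $R$ that are univalent in $\Delta$ (hence without poles in $\Delta$) with $R(0)=0,R'(0)=1$. For such $R$ and real $\tau$, $\beta_R(\tau)=\limsup_{r\to1^-}\frac{\log\int_{-\pi}^{\pi}|R'(re^{i\theta})|^\tau d\theta}{|\log(1-r)|}$. *)

theory Defs
  imports "HOL-Analysis.Analysis" "HOL-Computational_Algebra.Polynomial" "HOL-Library.Liminf_Limsup"
begin

definition univalent_rational :: "(complex \<Rightarrow> complex) set" where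
  "univalent_rational = {R. (\<exists>p q :: complex poly.
        (\<forall>z\<in>ball 0 1. poly q z \<noteq> 0) \<and> R = (\<lambda>z. poly p z / poly q z))
      \<and> inj_on R (ball 0 1) \<and> R 0 = 0 \<and> deriv R 0 = 1}"

definition integral_means_spectrum :: "(complex \<Rightarrow> complex) \<Rightarrow> real \<Rightarrow> ereal" where
  "integral_means_spectrum R \<tau> =
     Limsup (at_left 1) (\<lambda>r::real. ereal
        (ln (integral {-pi..pi} (\<lambda>\<theta>. cmod (deriv R (complex_of_real r * cis \<theta>)) powr \<tau>))
         / \<bar>ln (1 - r)\<bar>))"

end

theory Submission
  imports Defs "HOL-Complex_Analysis.Complex_Analysis" "HOL-Computational_Algebra.Polynomial"
begin


lemma one_minus_cos_le: fixes x :: real shows "1 - cos x \<le> x\<^sup>2 / 2"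
proof -
  have *: "1 - cos x \<le> x\<^sup>2 / 2" if "x \<ge> 0" for x :: real
  proof -
    let ?f = "\<lambda>x::real. x\<^sup>2 / 2 - 1 + cos x"
    have "?f 0 \<le> ?f x"
    proof (rule DERIV_nonneg_imp_nondecreasing[OF that])
      fix u :: real assume "0 \<le> u" "u \<le> x"
      show "\<exists>y. (?f has_real_derivative y) (at u) \<and> 0 \<le> y"
        by (rule exI[of _ "u - sin u"]) (auto intro!: derivative_eq_intros simp: sin_x_le_x \<open>0 \<le> u\<close>)
    qed
    then show ?thesis by simp
  qed
  show ?thesis using *[of x] *[of "-x"] by (cases "x \<ge> 0") auto
qed

lemma sin_ge_cubic: fixes x :: real assumes "x \<ge> 0" shows "x - x^3/6 \<le> sin x"
proof -
  let ?f = "\<lambda>x::real. sin x - x + x^3/6"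
  have "?f 0 \<le> ?f x"
  proof (rule DERIV_nonneg_imp_nondecreasing[OF assms])
    fix u :: real assume "0 \<le> u" "u \<le> x"
    show "\<exists>y. (?f has_real_derivative y) (at u) \<and> 0 \<le> y"
      using one_minus_cos_le[of u] by (intro exI[of _ "cos u - 1 + u\<^sup>2/2"]) (auto intro!: derivative_eq_intros simp: algebra_simps)
  qed
  then show ?thesis by simp
qed

lemma one_minus_cos_ge_quartic: fixes x :: real shows "x\<^sup>2/2 - x^4/24 \<le> 1 - cos x"
proof -
  have *: "x\<^sup>2/2 - x^4/24 \<le> 1 - cos x" if "x \<ge> 0" for x :: real
  proof -
    let ?f = "\<lambda>x::real. 1 - cos x - x\<^sup>2/2 + x^4/24"
    have "?f 0 \<le> ?f x"
    proof (rule DERIV_nonneg_imp_nondecreasing[OF that])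
      fix u :: real assume "0 \<le> u" "u \<le> x"
      show "\<exists>y. (?f has_real_derivative y) (at u) \<and> 0 \<le> y"
        using sin_ge_cubic[of u] \<open>0 \<le> u\<close> by (intro exI[of _ "sin u - u + u^3/6"]) (auto intro!: derivative_eq_intros simp: algebra_simps)
    qed
    then show ?thesis by simp
  qed
  show ?thesis using *[of x] *[of "-x"] by (cases "x \<ge> 0") auto
qed

lemma one_minus_cos_ge: fixes x :: real assumes "\<bar>x\<bar> \<le> pi" shows "x\<^sup>2/16 \<le> 1 - cos x"
proof (cases "\<bar>x\<bar> \<le> pi/2")
  case True
  have "x\<^sup>2 \<le> (pi/2)\<^sup>2" using True abs_le_square_iff[of x "pi/2"] by (simp add: pi_ge_zero)
  also have "(pi/2)\<^sup>2 \<le> 2\<^sup>2" using pi_less_4 pi_gt3 by (intro power_mono) auto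
  finally have "x\<^sup>2 \<le> 4" by simp
  then have "x\<^sup>2/16 \<le> x\<^sup>2/2 - x^4/24"
  proof -
    have "x^4 = x\<^sup>2 * x\<^sup>2" by algebra
    moreover have "x\<^sup>2 * x\<^sup>2 \<le> x\<^sup>2 * 4" using \<open>x\<^sup>2 \<le> 4\<close> by (intro mult_left_mono) auto
    ultimately show ?thesis using zero_le_power2[of x] by linarith
  qed
  then show ?thesis using one_minus_cos_ge_quartic[of x] by linarith
next
  case False
  have c: "cos x = cos \<bar>x\<bar>" by (cases "x \<ge> 0") auto
  have "cos \<bar>x\<bar> = - sin (\<bar>x\<bar> - pi/2)" using sin_diff[of "\<bar>x\<bar>" "pi/2"] by simp
  moreover have "0 \<le> sin (\<bar>x\<bar> - pi/2)"
  proof (rule sin_ge_zero)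
    show "0 \<le> \<bar>x\<bar> - pi/2" using False by linarith
    show "\<bar>x\<bar> - pi/2 \<le> pi" using assms pi_ge_zero by linarith
  qed
  ultimately have "cos x \<le> 0" using c by linarith
  moreover have "x\<^sup>2 \<le> 16"
  proof -
    have "x\<^sup>2 \<le> pi\<^sup>2" using assms abs_le_square_iff[of x pi] by (simp add: pi_ge_zero)
    also have "pi\<^sup>2 \<le> 4\<^sup>2" using pi_less_4 pi_gt3 by (intro power_mono) auto
    finally show ?thesis by simp
  qed
  ultimately show ?thesis by linarith
qed


lemma cmod_rcis_diff_sq:
  fixes r t p :: real
  shows "(cmod (complex_of_real r * cis t - cis p))\<^sup>2 = (1-r)\<^sup>2 + 2*r*(1 - cos (t - p))"
proof -
  have "(cmod (complex_of_real r * cis t - cis p))\<^sup>2 = (r * cos t - cos p)\<^sup>2 + (r * sin t - sin p)\<^sup>2"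
    by (simp add: cmod_power2)
  also have "\<dots> = r\<^sup>2 * ((sin t)\<^sup>2 + (cos t)\<^sup>2) + ((sin p)\<^sup>2 + (cos p)\<^sup>2) - 2*r*(cos t * cos p + sin t * sin p)"
    by (simp add: power2_diff power_mult_distrib algebra_simps del: sin_cos_squared_add sin_cos_squared_add2 sin_cos_squared_add3)
  also have "\<dots> = r\<^sup>2 + 1 - 2*r*cos (t - p)"
    by (simp add: cos_diff)
  also have "\<dots> = (1-r)\<^sup>2 + 2*r*(1 - cos (t - p))"
    by (simp add: power2_eq_square algebra_simps)
  finally show ?thesis .
qed

lemma arctan_integral_bound:
  fixes e c :: real
  assumes e: "e > 0"
  shows "((\<lambda>t. 1 / (e\<^sup>2 + (t - c)\<^sup>2/16)) has_integral
           (4/e * arctan ((pi - c)/(4*e)) - 4/e * arctan ((-pi - c)/(4*e)))) {-pi..pi}"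
    and "4/e * arctan ((pi - c)/(4*e)) - 4/e * arctan ((-pi - c)/(4*e)) \<le> 4*pi/e"
proof -
  have d: "((\<lambda>t. 4/e * arctan ((t - c)/(4*e))) has_real_derivative 1 / (e\<^sup>2 + (t - c)\<^sup>2/16)) (at t)" for t
  proof -
    have "((\<lambda>t. 4/e * arctan ((t - c)/(4*e))) has_real_derivative
          4/e * (inverse (1 + ((t - c)/(4*e))\<^sup>2) * (1/(4*e)))) (at t)"
      using e by (auto intro!: derivative_eq_intros)
    moreover have "4/e * (inverse (1 + ((t - c)/(4*e))\<^sup>2) * (1/(4*e))) = 1 / (e\<^sup>2 + (t - c)\<^sup>2/16)"
    proof -
      have p: "0 < 16*e\<^sup>2 + (t-c)\<^sup>2" using e by (simp add: add_pos_nonneg)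
      have "1 + ((t - c)/(4*e))\<^sup>2 = (16*e\<^sup>2 + (t-c)\<^sup>2) / (16*e\<^sup>2)" using e by (simp add: field_simps power2_eq_square)
      moreover have "e\<^sup>2 + (t - c)\<^sup>2/16 = (16*e\<^sup>2 + (t-c)\<^sup>2) / 16" by simp
      ultimately show ?thesis using e p by (simp add: field_simps power2_eq_square)
    qed
    ultimately show ?thesis by simp
  qed
  show "((\<lambda>t. 1 / (e\<^sup>2 + (t - c)\<^sup>2/16)) has_integral
           (4/e * arctan ((pi - c)/(4*e)) - 4/e * arctan ((-pi - c)/(4*e)))) {-pi..pi}"
  proof (rule fundamental_theorem_of_calculus)
    show "- pi \<le> pi" using pi_ge_zero by simp
    fix x assume "x \<in> {-pi..pi}"
    show "((\<lambda>t. 4/e * arctan ((t - c)/(4*e))) has_vector_derivative 1 / (e\<^sup>2 + (x - c)\<^sup>2/16)) (at x within {-pi..pi})"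
      using d[of x] by (simp add: has_real_derivative_iff_has_vector_derivative[symmetric] has_field_derivative_at_within)
  qed
  have "arctan ((pi - c)/(4*e)) < pi/2" "-(pi/2) < arctan ((-pi - c)/(4*e))"
    by (rule arctan_ubound, rule arctan_lbound)
  then have "arctan ((pi - c)/(4*e)) - arctan ((-pi - c)/(4*e)) \<le> pi" by linarith
  then have "4/e * (arctan ((pi - c)/(4*e)) - arctan ((-pi - c)/(4*e))) \<le> 4/e * pi"
    using e by (intro mult_left_mono) auto
  then show "4/e * arctan ((pi - c)/(4*e)) - 4/e * arctan ((-pi - c)/(4*e)) \<le> 4*pi/e"
    by (simp add: right_diff_distrib)
qed

lemma recip_dist_bound:
  fixes r t p :: real
  assumes r: "1/2 \<le> r" "r < 1" and t: "\<bar>t - p\<bar> \<le> 2*pi"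
  shows "1 / (cmod (complex_of_real r * cis t - cis p))\<^sup>2 \<le>
     1 / ((1-r)\<^sup>2 + (t - p)\<^sup>2/16) + 1 / ((1-r)\<^sup>2 + (t - (p + 2*pi))\<^sup>2/16) + 1 / ((1-r)\<^sup>2 + (t - (p - 2*pi))\<^sup>2/16)"
proof -
  define e where "e = 1 - r"
  have e: "e > 0" using r by (simp add: e_def)
  obtain s where s: "\<bar>s\<bar> \<le> pi" "cos s = cos (t - p)"
       "s = t - p \<or> s = t - (p + 2*pi) \<or> s = t - (p - 2*pi)"
  proof (cases "\<bar>t - p\<bar> \<le> pi")
    case True then show ?thesis using that[of "t - p"] by auto
  next
    case False
    show ?thesis
    proof (cases "t - p > 0")
      case True
      have "cos (t - (p + 2*pi)) = cos (t - p)"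
        by (simp add: cos_diff cos_add sin_diff)
      then show ?thesis using that[of "t - (p + 2*pi)"] True False t by auto
    next
      case f2: False
      have "cos (t - (p - 2*pi)) = cos (t - p)"
        by (simp add: cos_diff cos_add sin_diff)
      then show ?thesis using that[of "t - (p - 2*pi)"] f2 False t by auto
    qed
  qed
  have pos: "0 < e\<^sup>2 + s\<^sup>2/16" using e by (simp add: add_pos_nonneg)
  have "e\<^sup>2 + s\<^sup>2/16 \<le> e\<^sup>2 + 2*r*(1 - cos (t - p))"
  proof -
    have "s\<^sup>2/16 \<le> 1 - cos s" by (rule one_minus_cos_ge[OF s(1)])
    moreover have "0 \<le> 1 - cos s" by simp
    moreover have "1 - cos s \<le> 2*r*(1 - cos (t - p))"
    proof -
      have "1 * (1 - cos s) \<le> (2*r)*(1 - cos s)" using r \<open>0 \<le> 1 - cos s\<close>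
        by (intro mult_right_mono) auto
      then show ?thesis using s(2) by simp
    qed
    ultimately show ?thesis using s(2) by linarith
  qed
  then have "1 / (cmod (complex_of_real r * cis t - cis p))\<^sup>2 \<le> 1 / (e\<^sup>2 + s\<^sup>2/16)"
    using pos by (simp add: cmod_rcis_diff_sq e_def frac_le)
  moreover have "0 \<le> 1 / ((1-r)\<^sup>2 + x\<^sup>2/16)" for x using e by (simp add: e_def add_nonneg_nonneg)
  ultimately show ?thesis using s(3) unfolding e_def
    by (elim disjE) (simp_all add: add_increasing add_increasing2)
qed

lemma cmod_rcis_pos:
  fixes r t :: real assumes "0 \<le> r" "r < 1" "cmod a = 1"
  shows "1 - r \<le> cmod (complex_of_real r * cis t - a)"
proof -
  have "cmod a - cmod (complex_of_real r * cis t) \<le> cmod (complex_of_real r * cis t - a)"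
    by (metis norm_minus_commute norm_triangle_ineq2)
  then show ?thesis using assms by (simp add: norm_mult)
qed

lemma circle_integral_sq:
  fixes r :: real
  assumes r: "1/2 \<le> r" "r < 1" and a: "cmod a = 1"
  shows "(\<lambda>t. 1 / (cmod (complex_of_real r * cis t - a))\<^sup>2) integrable_on {-pi..pi}"
    and "integral {-pi..pi} (\<lambda>t. 1 / (cmod (complex_of_real r * cis t - a))\<^sup>2) \<le> 12*pi/(1-r)"
proof -
  define p :: real where "p = Arg a"
  have ap: "a = cis p" using rcis_cmod_Arg[of a] a unfolding p_def by (simp add: rcis_def)
  have pb: "-pi < p" "p \<le> pi" unfolding p_def using Arg_bounded by auto
  define e where "e = 1 - r"
  have e: "e > 0" using r by (simp add: e_def)
  have nz: "cmod (complex_of_real r * cis t - a) \<noteq> 0" for t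
    using cmod_rcis_pos[of r a t] r a by auto
  show int: "(\<lambda>t. 1 / (cmod (complex_of_real r * cis t - a))\<^sup>2) integrable_on {-pi..pi}"
    by (rule integrable_continuous_interval) (use nz in \<open>auto intro!: continuous_intros\<close>)
  define g where "g = (\<lambda>c t. 1 / (e\<^sup>2 + (t - c)\<^sup>2/16))"
  have gi: "(g c has_integral (4/e * arctan ((pi - c)/(4*e)) - 4/e * arctan ((-pi - c)/(4*e)))) {-pi..pi}"
     and gb: "4/e * arctan ((pi - c)/(4*e)) - 4/e * arctan ((-pi - c)/(4*e)) \<le> 4*pi/e" for c
    unfolding g_def using arctan_integral_bound[OF e, of c] by auto
  have gint: "g c integrable_on {-pi..pi}" and gI: "integral {-pi..pi} (g c) \<le> 4*pi/e" for c
    using gi[of c] gb[of c] by (auto simp: integral_unique has_integral_integrable)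
  have "integral {-pi..pi} (\<lambda>t. 1 / (cmod (complex_of_real r * cis t - a))\<^sup>2)
        \<le> integral {-pi..pi} (\<lambda>t. g p t + g (p + 2*pi) t + g (p - 2*pi) t)"
  proof (rule integral_le[OF int])
    show "(\<lambda>t. g p t + g (p + 2*pi) t + g (p - 2*pi) t) integrable_on {-pi..pi}"
      by (intro integrable_add gint)
    fix t assume "t \<in> {-pi..pi}"
    then have "\<bar>t - p\<bar> \<le> 2*pi" using pb by auto
    then show "1 / (cmod (complex_of_real r * cis t - a))\<^sup>2 \<le> g p t + g (p + 2*pi) t + g (p - 2*pi) t"
      using recip_dist_bound[OF r, of t p] unfolding g_def e_def ap by simp
  qed
  also have "\<dots> = integral {-pi..pi} (g p) + integral {-pi..pi} (g (p + 2*pi)) + integral {-pi..pi} (g (p - 2*pi))"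
    by (simp add: integral_add gint integrable_add)
  also have "\<dots> \<le> 4*pi/e + 4*pi/e + 4*pi/e" by (intro add_mono gI)
  finally show "integral {-pi..pi} (\<lambda>t. 1 / (cmod (complex_of_real r * cis t - a))\<^sup>2) \<le> 12*pi/(1-r)"
    by (simp add: e_def)
qed

lemma circle_integral_powr:
  fixes r \<tau> :: real
  assumes r: "1/2 \<le> r" "r < 1" and a: "cmod a = 1" and tau: "\<tau> \<le> -2"
  shows "(\<lambda>t. cmod (complex_of_real r * cis t - a) powr \<tau>) integrable_on {-pi..pi}"
    and "integral {-pi..pi} (\<lambda>t. cmod (complex_of_real r * cis t - a) powr \<tau>) \<le> 12*pi * (1-r) powr (\<tau>+1)"
proof -
  define e where "e = 1 - r"
  have e: "e > 0" using r by (simp add: e_def)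
  have lb: "e \<le> cmod (complex_of_real r * cis t - a)" for t
    using cmod_rcis_pos[of r a t] r a by (auto simp: e_def)
  show int: "(\<lambda>t. cmod (complex_of_real r * cis t - a) powr \<tau>) integrable_on {-pi..pi}"
  proof (rule integrable_continuous_interval)
    have "complex_of_real r * cis t \<noteq> a" for t using lb[of t] e by auto
    then show "continuous_on {-pi..pi} (\<lambda>t. cmod (complex_of_real r * cis t - a) powr \<tau>)"
      by (auto intro!: continuous_intros)
  qed
  have "integral {-pi..pi} (\<lambda>t. cmod (complex_of_real r * cis t - a) powr \<tau>)
      \<le> integral {-pi..pi} (\<lambda>t. e powr (\<tau>+2) * (1 / (cmod (complex_of_real r * cis t - a))\<^sup>2))"
  proof (rule integral_le[OF int])
    show "(\<lambda>t. e powr (\<tau>+2) * (1 / (cmod (complex_of_real r * cis t - a))\<^sup>2)) integrable_on {-pi..pi}"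
      using integrable_cmul[OF circle_integral_sq(1)[OF r a], of "e powr (\<tau>+2)"] by simp
    fix t
    define x where "x = cmod (complex_of_real r * cis t - a)"
    have x: "e \<le> x" "0 < x" using lb[of t] e by (auto simp: x_def)
    have "x powr \<tau> = x powr (\<tau>+2) * x powr (-2)" by (simp add: powr_add[symmetric])
    also have "\<dots> \<le> e powr (\<tau>+2) * x powr (-2)"
      using x tau e by (intro mult_right_mono powr_mono2') auto
    also have "x powr (-2) = 1 / x\<^sup>2" using x by (simp add: powr_minus powr_numeral divide_inverse)
    finally show "cmod (complex_of_real r * cis t - a) powr \<tau> \<le> e powr (\<tau>+2) * (1 / (cmod (complex_of_real r * cis t - a))\<^sup>2)"
      unfolding x_def .
  qed
  also have "\<dots> = e powr (\<tau>+2) * integral {-pi..pi} (\<lambda>t. 1 / (cmod (complex_of_real r * cis t - a))\<^sup>2)"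
    by (rule integral_mult[OF circle_integral_sq(1)[OF r a], symmetric])
  also have "\<dots> \<le> e powr (\<tau>+2) * (12*pi/e)"
    using circle_integral_sq(2)[OF r a] by (intro mult_left_mono) (auto simp: e_def)
  also have "\<dots> = 12*pi * e powr (\<tau>+1)"
    using e by (simp add: powr_add field_simps power2_eq_square)
  finally show "integral {-pi..pi} (\<lambda>t. cmod (complex_of_real r * cis t - a) powr \<tau>) \<le> 12*pi * (1-r) powr (\<tau>+1)"
    by (simp add: e_def)
qed



lemma cont_near:
  fixes f :: "complex \<Rightarrow> complex"
  assumes "continuous_on (ball b \<delta>) f" "\<delta> > 0" "\<epsilon> > 0"
  shows "\<exists>\<rho>>0. \<rho> \<le> \<delta> \<and> (\<forall>z\<in>ball b \<rho>. cmod (f z - f b) < \<epsilon>)"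
proof -
  have "isCont f b" using assms continuous_on_eq_continuous_at[of "ball b \<delta>" f] by auto
  then obtain d where d: "d > 0" "\<And>x'. dist x' b < d \<Longrightarrow> dist (f x') (f b) < \<epsilon>"
    using assms(3) unfolding continuous_at_eps_delta by blast
  show ?thesis
    by (rule exI[of _ "min d \<delta>"]) (use d assms in \<open>auto simp: dist_norm norm_minus_commute\<close>)
qed

lemma cmod_add_scaled_sq:
  fixes b v :: complex and t :: real
  shows "(cmod (b + of_real t * v))\<^sup>2 = (cmod b)\<^sup>2 + 2*t*Re (cnj b * v) + t\<^sup>2 * (cmod v)\<^sup>2"
  unfolding cmod_power2 by (simp add: power2_eq_square algebra_simps)

lemma in_disk_near_boundary:
  fixes b v :: complex and t \<kappa> :: real
  assumes "cmod b = 1" "Re (cnj b * v) \<le> -\<kappa>/2" "cmod v \<le> 2" "0 < t" "t < \<kappa>/4"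
  shows "b + of_real t * v \<in> ball 0 1"
proof -
  have "(cmod v)\<^sup>2 \<le> 4" using assms(3) power_mono[of "cmod v" 2 2] by simp
  have "(cmod (b + of_real t * v))\<^sup>2 = 1 + 2*t*Re (cnj b * v) + t\<^sup>2 * (cmod v)\<^sup>2"
    using cmod_add_scaled_sq[of b t v] assms(1) by simp
  also have "\<dots> \<le> 1 - t*\<kappa> + t\<^sup>2 * 4"
  proof -
    have "2*t*Re (cnj b * v) \<le> 2*t*(-\<kappa>/2)" using assms by (intro mult_left_mono) auto
    moreover have "t\<^sup>2 * (cmod v)\<^sup>2 \<le> t\<^sup>2 * 4" using \<open>(cmod v)\<^sup>2 \<le> 4\<close> by (intro mult_left_mono) auto
    ultimately show ?thesis by simp
  qed
  also have "\<dots> < 1"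
  proof -
    have "t * (4*t) < t * \<kappa>" using assms by (intro mult_strict_left_mono) auto
    then show ?thesis by (simp add: power2_eq_square algebra_simps)
  qed
  finally have "(cmod (b + of_real t * v))\<^sup>2 < 1" .
  then have "cmod (b + of_real t * v) < 1" by (metis abs_norm_cancel abs_square_less_1)
  then show ?thesis by simp
qed


lemma geo_contra:
  fixes R G :: "complex \<Rightarrow> complex" and b c0 :: complex and m :: nat
  assumes b: "cmod b = 1" and m: "m \<ge> 3" and \<delta>: "\<delta> > 0"
    and Ghol: "G holomorphic_on ball b \<delta>" and Gnz: "\<And>z. z \<in> ball b \<delta> \<Longrightarrow> G z \<noteq> 0"
    and Req: "\<And>z. z \<in> ball 0 1 \<inter> ball b \<delta> \<Longrightarrow> R z = c0 + (z - b)^m * G z"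
    and inj: "inj_on R (ball 0 1)"
  shows False
proof -
  obtain L where L: "L holomorphic_on ball b \<delta>" "\<And>z. z \<in> ball b \<delta> \<Longrightarrow> exp (L z) = G z"
    using holomorphic_logarithm_exists[of "ball b \<delta>" G b] Ghol Gnz \<delta> by auto
  define h where "h = (\<lambda>z. exp (L z / of_nat m))"
  have hhol: "h holomorphic_on ball b \<delta>" unfolding h_def using m by (intro holomorphic_intros L) auto
  have hpow: "h z ^ m = G z" if "z \<in> ball b \<delta>" for z
  proof -
    have "h z ^ m = exp (of_nat m * (L z / of_nat m))" unfolding h_def by (rule exp_of_nat_mult[symmetric])
    also have "of_nat m * (L z / of_nat m) = L z" using m by simp
    finally show ?thesis using L(2)[OF that] by simp
  qed
  have hnz: "h z \<noteq> 0" for z unfolding h_def by simp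
  define g where "g = (\<lambda>z. (z - b) * h z)"
  have ghol: "g holomorphic_on ball b \<delta>" unfolding g_def by (intro holomorphic_intros hhol)
  have Rg: "R z = c0 + g z ^ m" if "z \<in> ball 0 1" "z \<in> ball b \<delta>" for z
    using Req[of z] hpow[of z] that unfolding g_def by (simp add: power_mult_distrib)
  define \<gamma> where "\<gamma> = h b"
  have \<gamma>: "cmod \<gamma> > 0" using hnz by (simp add: \<gamma>_def)
  define \<kappa> where "\<kappa> = cos (pi / m)"
  have \<kappa>: "0 < \<kappa>" "\<kappa> \<le> 1"
  proof -
    have "pi / m \<le> pi / 3" using m by (intro divide_left_mono) (auto simp: pi_ge_zero)
    then have "pi / m < pi / 2" using pi_gt_zero by linarith
    moreover have "0 < pi / m" using m by simp
    ultimately show "0 < \<kappa>" unfolding \<kappa>_def by (intro cos_gt_zero_pi) auto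
    show "\<kappa> \<le> 1" unfolding \<kappa>_def by simp
  qed
  define \<epsilon> where "\<epsilon> = cmod \<gamma> * \<kappa> / 8"
  have \<epsilon>: "\<epsilon> > 0" using \<gamma> \<kappa> by (simp add: \<epsilon>_def)
  have \<epsilon>le: "\<epsilon> \<le> cmod \<gamma> / 8" using \<gamma> \<kappa> by (simp add: \<epsilon>_def)
  obtain \<rho> where \<rho>: "\<rho> > 0" "\<rho> \<le> \<delta>" and hclose: "\<And>z. z \<in> ball b \<rho> \<Longrightarrow> cmod (h z - \<gamma>) < \<epsilon>"
    using cont_near[OF holomorphic_on_imp_continuous_on[OF hhol] \<delta> \<epsilon>] unfolding \<gamma>_def by blast
  have sub: "ball b \<rho> \<subseteq> ball b \<delta>" using \<rho> by auto
  have hlow: "cmod (h z) \<ge> cmod \<gamma> - \<epsilon>" if "z \<in> ball b \<rho>" for z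
    using hclose[OF that] norm_triangle_ineq2[of \<gamma> "h z"] by (simp add: norm_minus_commute)
  have hup: "cmod (h z) \<le> cmod \<gamma> + \<epsilon>" if "z \<in> ball b \<rho>" for z
    using hclose[OF that] norm_triangle_ineq2[of "h z" \<gamma>] by simp
  have gnc: "\<not> g constant_on ball b \<rho>"
  proof
    assume "g constant_on ball b \<rho>"
    then obtain k where k: "\<And>z. z \<in> ball b \<rho> \<Longrightarrow> g z = k" unfolding constant_on_def by blast
    have "b \<in> ball b \<rho>" using \<rho> by simp
    moreover have "b + of_real (\<rho>/2) \<in> ball b \<rho>" using \<rho> by (simp add: dist_norm)
    ultimately have "g b = g (b + of_real (\<rho>/2))" using k by metis
    then show False using hnz[of "b + of_real (\<rho>/2)"] \<rho> unfolding g_def by simp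
  qed
  have "open (g ` ball b \<rho>)"
    by (rule open_mapping_thm[OF holomorphic_on_subset[OF ghol sub]]) (use gnc in auto)
  moreover have "0 \<in> g ` ball b \<rho>" using \<rho> by (auto simp: g_def intro!: image_eqI[of _ _ b])
  ultimately obtain \<eta> where \<eta>: "\<eta> > 0" "ball 0 \<eta> \<subseteq> g ` ball b \<rho>"
    using open_contains_ball by blast
  define u1 where "u1 = - b * cis (- pi / m)"
  define \<omega> where "\<omega> = cis (2 * pi / m)"
  define u2 where "u2 = \<omega> * u1"
  have bb: "cnj b * b = 1" using complex_norm_square[of b] b by (simp add: mult.commute)
  have u1n: "cmod u1 = 1" using b by (simp add: u1_def norm_mult)
  have u2n: "cmod u2 = 1" using b by (simp add: u2_def u1_def \<omega>_def norm_mult)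
  have u2e: "u2 = - b * cis (pi / m)"
  proof -
    have "\<omega> * cis (- pi / m) = cis (pi / m)" unfolding \<omega>_def cis_mult by (simp add: field_simps)
    then show ?thesis unfolding u2_def u1_def by (metis mult.left_commute mult_minus_left)
  qed
  have re1: "Re (cnj b * u1) = - \<kappa>"
  proof -
    have "cnj b * u1 = - (cnj b * b) * cis (- pi / m)" by (simp add: u1_def)
    then show ?thesis using bb by (simp add: \<kappa>_def)
  qed
  have re2: "Re (cnj b * u2) = - \<kappa>"
  proof -
    have "cnj b * u2 = - (cnj b * b) * cis (pi / m)" by (simp add: u2e)
    then show ?thesis using bb by (simp add: \<kappa>_def)
  qed
  have \<omega>m: "\<omega> ^ m = 1"
  proof -
    have "\<omega> ^ m = cis (real m * (2 * pi / m))" unfolding \<omega>_def by (rule Complex.DeMoivre)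
    also have "real m * (2 * pi / m) = 2 * pi" using m by simp
    finally show ?thesis by simp
  qed
  have \<omega>1: "\<omega> \<noteq> 1"
  proof -
    have "2 * pi / m < pi"
    proof -
      have "2 * pi / m \<le> 2 * pi / 3" using m by (intro divide_left_mono) (auto simp: pi_ge_zero)
      then show ?thesis using pi_gt_zero by linarith
    qed
    moreover have "0 < 2 * pi / m" using m by simp
    ultimately have "sin (2 * pi / m) > 0" by (intro sin_gt_zero) auto
    then show ?thesis unfolding \<omega>_def by (auto simp: complex_eq_iff)
  qed
  have \<omega>n: "cmod \<omega> = 1" by (simp add: \<omega>_def)
  define t where "t = min (\<rho>/2) (min (\<kappa>/8) (\<eta> / (2 * (cmod \<gamma> + \<epsilon>))))"
  have t: "0 < t" "t < \<rho>" "t < \<kappa>/4" "t * (cmod \<gamma> + \<epsilon>) < \<eta>"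
  proof -
    show "0 < t" using \<rho> \<kappa> \<eta> \<gamma> \<epsilon> by (simp add: t_def add_pos_pos)
    show "t < \<rho>" using \<rho> by (simp add: t_def)
    show "t < \<kappa>/4" using \<kappa> by (simp add: t_def)
    have "t \<le> \<eta> / (2 * (cmod \<gamma> + \<epsilon>))" by (simp add: t_def)
    then have "t * (cmod \<gamma> + \<epsilon>) \<le> \<eta> / (2 * (cmod \<gamma> + \<epsilon>)) * (cmod \<gamma> + \<epsilon>)"
      using \<gamma> \<epsilon> by (intro mult_right_mono) auto
    also have "\<dots> = \<eta> / 2" proof - have "cmod \<gamma> + \<epsilon> \<noteq> 0" using \<gamma> \<epsilon> by linarith then show ?thesis by (simp add: field_simps) qed
    finally show "t * (cmod \<gamma> + \<epsilon>) < \<eta>" using \<eta> by linarith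
  qed
  define z1 where "z1 = b + of_real t * u1"
  have z1b: "z1 \<in> ball b \<rho>" using t u1n by (simp add: z1_def dist_norm norm_mult)
  have z1d: "z1 \<in> ball 0 1" unfolding z1_def
    by (rule in_disk_near_boundary[OF b _ _ t(1) t(3)]) (use re1 u1n \<kappa> in auto)
  have gz1: "g z1 = of_real t * u1 * h z1" by (simp add: g_def z1_def)
  have gz1n: "cmod (g z1) < \<eta>"
  proof -
    have "cmod (g z1) = t * cmod (h z1)" using t u1n by (simp add: gz1 norm_mult)
    also have "\<dots> \<le> t * (cmod \<gamma> + \<epsilon>)" using hup[OF z1b] t by (intro mult_left_mono) auto
    finally show ?thesis using t(4) by linarith
  qed
  have gz1nz: "g z1 \<noteq> 0" using t hnz u1n by (auto simp: gz1)
  have "\<omega> * g z1 \<in> ball 0 \<eta>" using gz1n \<omega>n by (simp add: norm_mult)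
  then have "\<omega> * g z1 \<in> g ` ball b \<rho>" using \<eta>(2) by (rule subsetD[rotated])
  then obtain z2 where z2b: "z2 \<in> ball b \<rho>" and gz2: "g z2 = \<omega> * g z1" by (metis imageE)
  define lam where "lam = h z1 / h z2"
  have z2e: "z2 = b + of_real t * (u2 * lam)"
  proof -
    have "(z2 - b) * h z2 = \<omega> * (of_real t * u1 * h z1)" using gz2 unfolding gz1 by (simp add: g_def)
    then have "z2 - b = \<omega> * (of_real t * u1 * h z1) / h z2" using hnz[of z2] by (simp add: field_simps)
    then show ?thesis by (simp add: lam_def u2_def field_simps)
  qed
  have lamb: "cmod (lam - 1) \<le> \<kappa>/2"
  proof -
    have hz2: "cmod (h z2) \<ge> cmod \<gamma> - \<epsilon>" by (rule hlow[OF z2b])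
    have pos: "cmod \<gamma> - \<epsilon> > 0" using \<epsilon>le \<gamma> by linarith
    have "lam - 1 = (h z1 - h z2) / h z2" using hnz[of z2] by (simp add: lam_def field_simps)
    then have "cmod (lam - 1) = cmod (h z1 - h z2) / cmod (h z2)" by (simp add: norm_divide)
    also have "\<dots> \<le> (2 * \<epsilon>) / (cmod \<gamma> - \<epsilon>)"
    proof (rule frac_le)
      have "cmod (h z1 - h z2) \<le> cmod (h z1 - \<gamma>) + cmod (h z2 - \<gamma>)"
        using norm_triangle_ineq4[of "h z1 - \<gamma>" "h z2 - \<gamma>"] by simp
      then show "cmod (h z1 - h z2) \<le> 2 * \<epsilon>" using hclose[OF z1b] hclose[OF z2b] by linarith
    qed (use pos hz2 \<epsilon> in auto)
    also have "\<dots> \<le> \<kappa>/2"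
    proof -
      have "4 * \<epsilon> \<le> \<kappa> * (cmod \<gamma> - \<epsilon>)"
      proof -
        have a: "\<kappa> * \<epsilon> \<le> 1 * \<epsilon>" using \<kappa> \<epsilon> by (intro mult_right_mono) auto
        have b: "\<kappa> * (cmod \<gamma> - \<epsilon>) = \<kappa> * cmod \<gamma> - \<kappa> * \<epsilon>" by (simp add: algebra_simps)
        have c: "\<epsilon> = (\<kappa> * cmod \<gamma>) / 8" unfolding \<epsilon>_def by simp
        have d: "0 \<le> \<kappa> * cmod \<gamma>" using \<kappa> by simp
        show ?thesis using a b c d by linarith
      qed
      then show ?thesis using pos by (simp add: field_simps)
    qed
    finally show ?thesis .
  qed
  have z2d: "z2 \<in> ball 0 1" unfolding z2e
  proof (rule in_disk_near_boundary[OF b _ _ t(1) t(3)])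
    have "Re (cnj b * (u2 * lam)) = Re (cnj b * u2) + Re (cnj b * u2 * (lam - 1))"
      by (simp add: algebra_simps)
    also have "Re (cnj b * u2 * (lam - 1)) \<le> cmod (cnj b * u2 * (lam - 1))" by (rule complex_Re_le_cmod)
    also have "cmod (cnj b * u2 * (lam - 1)) = cmod (lam - 1)" using b u2n by (simp add: norm_mult)
    finally show "Re (cnj b * (u2 * lam)) \<le> - \<kappa> / 2" using re2 lamb by linarith
    have "cmod lam \<le> cmod (lam - 1) + 1" using norm_triangle_ineq2[of lam 1] by simp
    then show "cmod (u2 * lam) \<le> 2" using lamb \<kappa> u2n by (simp add: norm_mult)
  qed
  have "R z1 = R z2"
  proof -
    have "R z1 = c0 + g z1 ^ m" using Rg z1d z1b sub by blast
    moreover have "R z2 = c0 + g z2 ^ m" using Rg z2d z2b sub by blast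
    moreover have "g z2 ^ m = g z1 ^ m" using \<omega>m by (simp add: gz2 power_mult_distrib)
    ultimately show ?thesis by simp
  qed
  then have "z1 = z2" using inj z1d z2d by (auto dest: inj_onD)
  then have "g z1 = \<omega> * g z1" using gz2 by simp
  then show False using gz1nz \<omega>1 by simp
qed


lemma deriv_local:
  assumes "(F has_field_derivative D) (at z)" "open S" "z \<in> S" "\<And>w. w \<in> S \<Longrightarrow> R w = F w"
  shows "deriv R z = D"
proof -
  have "(R has_field_derivative D) (at z)"
    by (rule has_field_derivative_transform_within_open[OF assms(1-3)]) (use assms(4) in auto)
  then show ?thesis by (rule DERIV_imp_deriv)
qed

lemma locB:
  fixes R G :: "complex \<Rightarrow> complex"
  assumes Rhol: "R holomorphic_on ball 0 1" and inj: "inj_on R (ball 0 1)"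
    and b: "cmod b \<le> 1" and m: "m \<ge> 1" and \<delta>: "0 < \<delta>" "\<delta> \<le> 1"
    and Ghol: "G holomorphic_on ball b \<delta>" and Gnz: "\<And>z. z \<in> ball b \<delta> \<Longrightarrow> G z \<noteq> 0"
    and Req: "\<And>z. z \<in> ball 0 1 \<inter> ball b \<delta> \<Longrightarrow> R z = c0 + (z - b)^m * G z"
  shows "\<exists>\<delta>'>0. \<exists>c>0. (\<forall>z\<in>ball 0 1 \<inter> ball b \<delta>'. c \<le> cmod (deriv R z)) \<or>
            (cmod b = 1 \<and> (\<forall>z\<in>ball 0 1 \<inter> ball b \<delta>'. c * cmod (z - b) \<le> cmod (deriv R z)))"
proof -
  define K where "K = (\<lambda>z. of_nat m * G z + (z - b) * deriv G z)"
  have Khol: "K holomorphic_on ball b \<delta>" unfolding K_def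
    by (intro holomorphic_intros Ghol holomorphic_deriv) auto
  have Kb: "K b \<noteq> 0" using Gnz[of b] \<delta> m by (simp add: K_def)
  obtain \<rho> where \<rho>: "\<rho> > 0" "\<rho> \<le> \<delta>" and Kc: "\<And>z. z \<in> ball b \<rho> \<Longrightarrow> cmod (K z - K b) < cmod (K b) / 2"
    using cont_near[OF holomorphic_on_imp_continuous_on[OF Khol] \<delta>(1), of "cmod (K b)/2"] Kb by auto
  have Klow: "cmod (K b) / 2 \<le> cmod (K z)" if "z \<in> ball b \<rho>" for z
    using Kc[OF that] norm_triangle_ineq2[of "K b" "K z"] by (simp add: norm_minus_commute)
  obtain k where k: "m = Suc k" using m by (cases m) auto
  have dR: "deriv R z = (z - b)^k * K z" if z: "z \<in> ball 0 1 \<inter> ball b \<delta>" for z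
  proof (rule deriv_local[of "\<lambda>z. c0 + (z - b)^m * G z" _ z "ball 0 1 \<inter> ball b \<delta>"])
    have Gd: "(G has_field_derivative deriv G z) (at z)"
      using holomorphic_derivI[OF Ghol _, of z] z by auto
    have "((\<lambda>z. c0 + (z - b)^m * G z) has_field_derivative
            (of_nat m * (z - b)^(m - 1) * 1 * G z + (z - b)^m * deriv G z)) (at z)"
      by (auto intro!: derivative_eq_intros Gd)
    moreover have "of_nat m * (z - b)^(m - 1) * 1 * G z + (z - b)^m * deriv G z = (z - b)^k * K z"
      unfolding K_def k by (simp add: algebra_simps)
    ultimately show "((\<lambda>z. c0 + (z - b)^m * G z) has_field_derivative (z - b)^k * K z) (at z)" by simp
  qed (use z Req in auto)
  have c: "cmod (K b) / 2 > 0" using Kb by simp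
  have sub: "ball 0 1 \<inter> ball b \<rho> \<subseteq> ball 0 1 \<inter> ball b \<delta>" using \<rho> by auto
  show ?thesis
  proof (cases "k = 0")
    case True
    have "\<forall>z\<in>ball 0 1 \<inter> ball b \<rho>. cmod (K b) / 2 \<le> cmod (deriv R z)"
      using dR sub Klow True by auto
    then show ?thesis using \<rho> c by blast
  next
    case False
    have b1: "cmod b = 1"
    proof (rule ccontr)
      assume "cmod b \<noteq> 1"
      then have bD: "b \<in> ball 0 1" using b by simp
      then have "deriv R b = 0" using dR[of b] \<delta> False by simp
      moreover have "deriv R b \<noteq> 0"
        by (rule holomorphic_injective_imp_regular[OF Rhol _ inj bD]) simp
      ultimately show False by simp
    qed
    show ?thesis
    proof (cases "k = 1")
      case True
      have "\<forall>z\<in>ball 0 1 \<inter> ball b \<rho>. cmod (K b) / 2 * cmod (z - b) \<le> cmod (deriv R z)"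
      proof
        fix z assume z: "z \<in> ball 0 1 \<inter> ball b \<rho>"
        have "cmod (deriv R z) = cmod (z - b) * cmod (K z)" using dR[of z] z sub True by (auto simp: norm_mult)
        moreover have "cmod (K b) / 2 * cmod (z - b) \<le> cmod (K z) * cmod (z - b)"
          using Klow[of z] z by (intro mult_right_mono) auto
        ultimately show "cmod (K b) / 2 * cmod (z - b) \<le> cmod (deriv R z)" by (simp add: mult.commute)
      qed
      then show ?thesis using \<rho> c b1 by blast
    next
      case False2: False
      have "m \<ge> 3" using k False False2 by auto
      from geo_contra[OF b1 this \<delta>(1) Ghol Gnz Req inj] show ?thesis by simp
    qed
  qed
qed

lemma locA:
  fixes R G :: "complex \<Rightarrow> complex"
  assumes j: "j \<ge> 1" and \<delta>: "0 < \<delta>" "\<delta> \<le> 1"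
    and Ghol: "G holomorphic_on ball b \<delta>" and Gnz: "\<And>z. z \<in> ball b \<delta> \<Longrightarrow> G z \<noteq> 0"
    and Req: "\<And>z. z \<in> ball 0 1 \<inter> ball b \<delta> \<Longrightarrow> z \<noteq> b \<and> R z = G z / (z - b)^j"
  shows "\<exists>\<delta>'>0. \<exists>c>0. (\<forall>z\<in>ball 0 1 \<inter> ball b \<delta>'. c \<le> cmod (deriv R z))"
proof -
  define K where "K = (\<lambda>z. (z - b) * deriv G z - of_nat j * G z)"
  have Khol: "K holomorphic_on ball b \<delta>" unfolding K_def
    by (intro holomorphic_intros Ghol holomorphic_deriv) auto
  have Kb: "K b \<noteq> 0" using Gnz[of b] \<delta> j by (simp add: K_def)
  obtain \<rho> where \<rho>: "\<rho> > 0" "\<rho> \<le> \<delta>" and Kc: "\<And>z. z \<in> ball b \<rho> \<Longrightarrow> cmod (K z - K b) < cmod (K b) / 2"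
    using cont_near[OF holomorphic_on_imp_continuous_on[OF Khol] \<delta>(1), of "cmod (K b)/2"] Kb by auto
  have Klow: "cmod (K b) / 2 \<le> cmod (K z)" if "z \<in> ball b \<rho>" for z
    using Kc[OF that] norm_triangle_ineq2[of "K b" "K z"] by (simp add: norm_minus_commute)
  obtain k where k: "j = Suc k" using j by (cases j) auto
  have dR: "deriv R z = K z / (z - b)^(k+2)" if z: "z \<in> ball 0 1 \<inter> ball b \<delta>" for z
  proof (rule deriv_local[of "\<lambda>z. G z / (z - b)^j" _ z "ball 0 1 \<inter> ball b \<delta>"])
    have zb: "z \<noteq> b" using Req[OF z] by simp
    have Gd: "(G has_field_derivative deriv G z) (at z)"
      using holomorphic_derivI[OF Ghol _, of z] z by auto
    have "((\<lambda>z. G z / (z - b)^j) has_field_derivative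
            ((deriv G z * (z - b)^j - G z * (of_nat j * (z - b)^(j - 1) * 1)) / ((z - b)^j * (z - b)^j))) (at z)"
      using zb by (auto intro!: derivative_eq_intros Gd)
    moreover have "(deriv G z * (z - b)^j - G z * (of_nat j * (z - b)^(j - 1) * 1)) / ((z - b)^j * (z - b)^j)
        = K z / (z - b)^(k+2)"
    proof -
      have zb': "z - b \<noteq> 0" using zb by simp
      have "deriv G z * (z - b)^j - G z * (of_nat j * (z - b)^(j - 1) * 1) = (z - b)^k * K z"
        unfolding K_def k by (simp add: algebra_simps)
      moreover have "(z - b)^j * (z - b)^j = (z - b)^k * (z - b)^(k+2)"
        unfolding k by (simp add: power_add[symmetric])
      ultimately show ?thesis using zb' by simp
    qed
    ultimately show "((\<lambda>z. G z / (z - b)^j) has_field_derivative K z / (z - b)^(k+2)) (at z)" by simp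
  qed (use z Req in auto)
  have c: "cmod (K b) / 2 > 0" using Kb by simp
  have "\<forall>z\<in>ball 0 1 \<inter> ball b \<rho>. cmod (K b) / 2 \<le> cmod (deriv R z)"
  proof
    fix z assume z: "z \<in> ball 0 1 \<inter> ball b \<rho>"
    then have zd: "z \<in> ball 0 1 \<inter> ball b \<delta>" using \<rho> by auto
    have zb: "z \<noteq> b" using Req[OF zd] by simp
    have le1: "cmod (z - b) ^ (k+2) \<le> 1"
    proof -
      have "cmod (z - b) < 1" using z \<rho> \<delta> by (auto simp: dist_norm norm_minus_commute)
      then show ?thesis by (intro power_le_one) auto
    qed
    have pos: "cmod (z - b) ^ (k+2) > 0" using zb by simp
    have "cmod (deriv R z) = cmod (K z) / cmod (z - b) ^ (k+2)" by (simp only: dR[OF zd] norm_divide norm_power)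
    also have "\<dots> \<ge> cmod (K z)" using le1 pos by (simp add: divide_simps mult_left_le)
    finally show "cmod (K b) / 2 \<le> cmod (deriv R z)" using Klow[of z] z by simp
  qed
  then show ?thesis using \<rho> c by blast
qed


lemma poly_decomp_at:
  fixes p :: "complex poly"
  assumes "p \<noteq> 0"
  shows "\<exists>p0. (\<forall>z. poly p z = (z - b)^(order b p) * poly p0 z) \<and> poly p0 b \<noteq> 0"
proof -
  obtain p0 where p0: "p = [:- b, 1:] ^ order b p * p0" "\<not> [:- b, 1:] dvd p0"
    using order_decomp[OF assms, of b] by blast
  have "poly p z = (z - b)^(order b p) * poly p0 z" for z
    by (subst p0(1)) (simp add: poly_mult poly_power)
  moreover have "poly p0 b \<noteq> 0" using p0(2) by (simp add: poly_eq_0_iff_dvd)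
  ultimately show ?thesis by blast
qed

lemma poly_nz_near:
  fixes p :: "complex poly"
  assumes "poly p b \<noteq> 0"
  shows "\<exists>e>0. \<forall>z\<in>ball b e. poly p z \<noteq> 0"
proof -
  have "continuous_on (ball b 1) (poly p)"
    by (rule holomorphic_on_imp_continuous_on) (intro holomorphic_intros)
  from cont_near[OF this _ , of "cmod (poly p b)"] assms
  obtain e where e: "e > 0" "\<forall>z\<in>ball b e. cmod (poly p z - poly p b) < cmod (poly p b)" by auto
  have "poly p z \<noteq> 0" if "z \<in> ball b e" for z
    using e(2) that by fastforce
  then show ?thesis using e by blast
qed

lemma loc_poly:
  fixes p q :: "complex poly" and R :: "complex \<Rightarrow> complex"
  assumes qnz: "\<forall>z\<in>ball 0 1. poly q z \<noteq> 0" and Rdef: "R = (\<lambda>z. poly p z / poly q z)"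
    and inj: "inj_on R (ball 0 1)" and d0: "deriv R 0 = 1" and b: "cmod b \<le> 1"
  shows "\<exists>\<delta>'>0. \<exists>c>0. (\<forall>z\<in>ball 0 1 \<inter> ball b \<delta>'. c \<le> cmod (deriv R z)) \<or>
            (cmod b = 1 \<and> (\<forall>z\<in>ball 0 1 \<inter> ball b \<delta>'. c * cmod (z - b) \<le> cmod (deriv R z)))"
proof -
  have Rhol: "R holomorphic_on ball 0 1" unfolding Rdef by (intro holomorphic_intros) (use qnz in auto)
  have pnz: "p \<noteq> 0"
  proof
    assume "p = 0"
    then have "R = (\<lambda>z. 0)" unfolding Rdef by simp
    then show False using d0 by simp
  qed
  have qnz0: "q \<noteq> 0" using qnz[rule_format, of 0] by auto
  obtain p0 where p0: "\<And>z. poly p z = (z - b)^(order b p) * poly p0 z" "poly p0 b \<noteq> 0"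
    using poly_decomp_at[OF pnz, of b] by blast
  obtain q0 where q0: "\<And>z. poly q z = (z - b)^(order b q) * poly q0 z" "poly q0 b \<noteq> 0"
    using poly_decomp_at[OF qnz0, of b] by blast
  define \<alpha> where "\<alpha> = order b p"
  define \<beta> where "\<beta> = order b q"
  obtain e1 where e1: "e1 > 0" "\<forall>z\<in>ball b e1. poly p0 z \<noteq> 0" using poly_nz_near[OF p0(2)] by blast
  obtain e2 where e2: "e2 > 0" "\<forall>z\<in>ball b e2. poly q0 z \<noteq> 0" using poly_nz_near[OF q0(2)] by blast
  define \<delta> where "\<delta> = min 1 (min e1 e2)"
  have \<delta>: "0 < \<delta>" "\<delta> \<le> 1" using e1 e2 by (auto simp: \<delta>_def)
  have p0nz: "poly p0 z \<noteq> 0" and q0nz: "poly q0 z \<noteq> 0" if "z \<in> ball b \<delta>" for z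
    using e1 e2 that by (auto simp: \<delta>_def)
  define H where "H = (\<lambda>z. poly p0 z / poly q0 z)"
  have Hhol: "H holomorphic_on ball b \<delta>" unfolding H_def by (intro holomorphic_intros) (use q0nz in auto)
  have Hnz: "H z \<noteq> 0" if "z \<in> ball b \<delta>" for z using p0nz[OF that] q0nz[OF that] by (simp add: H_def)
  have qbnz: "(z - b)^\<beta> \<noteq> 0" if "z \<in> ball 0 1" for z
  proof -
    have "poly q z \<noteq> 0" using qnz that by auto
    then show ?thesis unfolding \<beta>_def using q0(1)[of z] by (metis mult_zero_left)
  qed
  show ?thesis
  proof (cases "\<alpha> < \<beta>")
    case True
    define j where "j = \<beta> - \<alpha>"
    have j: "j \<ge> 1" using True by (simp add: j_def)
    have "\<exists>\<delta>'>0. \<exists>c>0. (\<forall>z\<in>ball 0 1 \<inter> ball b \<delta>'. c \<le> cmod (deriv R z))"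
    proof (rule locA[OF j \<delta> Hhol Hnz])
      fix z assume z: "z \<in> ball 0 1 \<inter> ball b \<delta>"
      have zb: "z \<noteq> b" using qbnz[of z] z True by (auto simp: power_0_left split: if_splits)
      have "(z - b)^\<beta> = (z - b)^\<alpha> * (z - b)^j" using True by (simp add: j_def power_add[symmetric])
      moreover have "(z - b)^\<alpha> \<noteq> 0" using zb by simp
      ultimately have "R z = ((z - b)^\<alpha> * poly p0 z) / ((z - b)^\<alpha> * ((z - b)^j * poly q0 z))"
        unfolding Rdef p0(1) q0(1) \<alpha>_def[symmetric] \<beta>_def[symmetric] by (simp add: mult.assoc)
      also have "\<dots> = poly p0 z / ((z - b)^j * poly q0 z)"
        using \<open>(z - b)^\<alpha> \<noteq> 0\<close> by (rule mult_divide_mult_cancel_left)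
      also have "\<dots> = H z / (z - b)^j" by (simp add: H_def)
      finally have "R z = H z / (z - b)^j" .
      then show "z \<noteq> b \<and> R z = H z / (z - b)^j" using zb by simp
    qed
    then show ?thesis by blast
  next
    case False
    define n where "n = \<alpha> - \<beta>"
    have Req: "R z = (z - b)^n * H z" if z: "z \<in> ball 0 1 \<inter> ball b \<delta>" for z
    proof -
      have "(z - b)^\<alpha> = (z - b)^\<beta> * (z - b)^n" using False by (simp add: n_def power_add[symmetric])
      moreover have "(z - b)^\<beta> \<noteq> 0" using qbnz z by auto
      moreover have "poly q0 z \<noteq> 0" using q0nz z by auto
      ultimately have "R z = ((z - b)^\<beta> * ((z - b)^n * poly p0 z)) / ((z - b)^\<beta> * poly q0 z)"
        unfolding Rdef p0(1) q0(1) \<alpha>_def[symmetric] \<beta>_def[symmetric] by (simp add: mult.assoc)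
      also have "\<dots> = ((z - b)^n * poly p0 z) / poly q0 z"
        using \<open>(z - b)^\<beta> \<noteq> 0\<close> by (rule mult_divide_mult_cancel_left)
      also have "\<dots> = (z - b)^n * H z" by (simp add: H_def)
      finally show ?thesis .
    qed
    show ?thesis
    proof (cases "n \<ge> 1")
      case True
      show ?thesis
      proof (rule locB[OF Rhol inj b True \<delta> Hhol Hnz, of 0])
        fix z assume "z \<in> ball 0 1 \<inter> ball b \<delta>"
        from Req[OF this] show "R z = 0 + (z - b)^n * H z" by simp
      qed
    next
      case False
      then have n0: "n = 0" by simp
      define N where "N = p0 - smult (H b) q0"
      have polyN: "poly N z = poly p0 z - H b * poly q0 z" for z by (simp add: N_def)
      have Nnz: "N \<noteq> 0"
      proof
        assume N0: "N = 0"
        have Hc: "H z = H b" if "z \<in> ball b \<delta>" for z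
          using polyN[of z] N0 q0nz[OF that] unfolding H_def by (simp add: field_simps)
        define w where "w = b * of_real (1 - \<delta>/2)"
        have wD: "w \<in> ball 0 1"
        proof -
          have "cmod w = cmod b * cmod (complex_of_real (1 - \<delta>/2))" by (simp only: w_def norm_mult)
          also have "cmod (complex_of_real (1 - \<delta>/2)) = 1 - \<delta>/2"
          proof -
            have "0 \<le> 1 - \<delta>/2" using \<delta> by simp
            then show ?thesis by (simp only: norm_of_real abs_of_nonneg)
          qed
          finally have "cmod w = cmod b * (1 - \<delta>/2)" .
          also have "\<dots> \<le> 1 - \<delta>/2" using mult_right_mono[of "cmod b" 1 "1 - \<delta>/2"] b \<delta> by simp
          finally show ?thesis using \<delta> by simp
        qed
        have wB: "w \<in> ball b \<delta>"
        proof -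
          have "b - w = b * of_real (\<delta>/2)" by (simp add: w_def algebra_simps)
          then have "cmod (b - w) = cmod b * cmod (complex_of_real (\<delta>/2))" by (simp only: norm_mult)
          also have "cmod (complex_of_real (\<delta>/2)) = \<delta>/2" using \<delta> by (simp add: norm_of_real)
          finally have "cmod (b - w) = cmod b * (\<delta>/2)" .
          also have "\<dots> \<le> \<delta>/2" using mult_right_mono[of "cmod b" 1 "\<delta>/2"] b \<delta> by simp
          finally show ?thesis using \<delta> by (simp add: dist_norm)
        qed
        have "deriv R w = 0"
        proof (rule deriv_local[of "\<lambda>z. H b" 0 w "ball 0 1 \<inter> ball b \<delta>"])
          fix z assume z: "z \<in> ball 0 1 \<inter> ball b \<delta>"
          then show "R z = H b" using Req[OF z] Hc[of z] n0 by simp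
        qed (use wD wB in auto)
        moreover have "deriv R w \<noteq> 0"
          by (rule holomorphic_injective_imp_regular[OF Rhol _ inj wD]) simp
        ultimately show False by simp
      qed
      obtain N0 where N0: "\<And>z. poly N z = (z - b)^(order b N) * poly N0 z" "poly N0 b \<noteq> 0"
        using poly_decomp_at[OF Nnz, of b] by blast
      define m where "m = order b N"
      have m: "m \<ge> 1"
      proof -
        have "poly N b = 0" using polyN[of b] q0(2) by (simp add: H_def)
        then show ?thesis using Nnz order_root[of N b] by (simp add: m_def)
      qed
      obtain e3 where e3: "e3 > 0" "\<forall>z\<in>ball b e3. poly N0 z \<noteq> 0" using poly_nz_near[OF N0(2)] by blast
      define \<delta>1 where "\<delta>1 = min \<delta> e3"
      have \<delta>1: "0 < \<delta>1" "\<delta>1 \<le> 1" using \<delta> e3 by (auto simp: \<delta>1_def)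
      define G where "G = (\<lambda>z. poly N0 z / poly q0 z)"
      have Ghol: "G holomorphic_on ball b \<delta>1"
        unfolding G_def by (intro holomorphic_intros) (use q0nz in \<open>auto simp: \<delta>1_def\<close>)
      have Gnz: "G z \<noteq> 0" if "z \<in> ball b \<delta>1" for z
        using e3 q0nz[of z] that by (auto simp: G_def \<delta>1_def)
      have "\<exists>\<delta>'>0. \<exists>c>0. (\<forall>z\<in>ball 0 1 \<inter> ball b \<delta>'. c \<le> cmod (deriv R z)) \<or>
            (cmod b = 1 \<and> (\<forall>z\<in>ball 0 1 \<inter> ball b \<delta>'. c * cmod (z - b) \<le> cmod (deriv R z)))"
      proof (rule locB[OF Rhol inj b m \<delta>1 Ghol Gnz, of "H b"])
        fix z assume z: "z \<in> ball 0 1 \<inter> ball b \<delta>1"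
        then have zd: "z \<in> ball 0 1 \<inter> ball b \<delta>" by (auto simp: \<delta>1_def)
        have qz: "poly q0 z \<noteq> 0" using q0nz zd by auto
        have "R z = H z" using Req[OF zd] n0 by simp
        also have "H z = H b + poly N z / poly q0 z" using qz unfolding polyN H_def by (simp add: field_simps)
        also have "\<dots> = H b + (z - b)^m * G z" unfolding N0(1) m_def G_def by simp
        finally show "R z = H b + (z - b)^m * G z" .
      qed
      then show ?thesis .
    qed
  qed
qed



lemma global_bound:
  fixes p q :: "complex poly" and R :: "complex \<Rightarrow> complex"
  assumes qnz: "\<forall>z\<in>ball 0 1. poly q z \<noteq> 0" and Rdef: "R = (\<lambda>z. poly p z / poly q z)"
    and inj: "inj_on R (ball 0 1)" and d0: "deriv R 0 = 1"
  shows "\<exists>A c. finite A \<and> A \<subseteq> sphere 0 1 \<and> c > 0 \<and>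
           (\<forall>z\<in>ball 0 1. c \<le> cmod (deriv R z) \<or> (\<exists>a\<in>A. c * cmod (z - a) \<le> cmod (deriv R z)))"
proof -
  define P where "P = (\<lambda>b dc. fst dc > 0 \<and> snd dc > 0 \<and>
     ((\<forall>z\<in>ball 0 1 \<inter> ball b (fst dc). snd dc \<le> cmod (deriv R z)) \<or>
      (cmod b = 1 \<and> (\<forall>z\<in>ball 0 1 \<inter> ball b (fst dc). snd dc * cmod (z - b) \<le> cmod (deriv R z)))))"
  have "\<forall>b\<in>cball 0 1. \<exists>dc. P b dc"
  proof
    fix b :: complex assume "b \<in> cball 0 1"
    then have "cmod b \<le> 1" by simp
    from loc_poly[OF qnz Rdef inj d0 this] obtain d c where
      "d > 0" "c > 0" "(\<forall>z\<in>ball 0 1 \<inter> ball b d. c \<le> cmod (deriv R z)) \<or>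
            (cmod b = 1 \<and> (\<forall>z\<in>ball 0 1 \<inter> ball b d. c * cmod (z - b) \<le> cmod (deriv R z)))"
      by blast
    then have "P b (d, c)" unfolding P_def by simp
    then show "\<exists>dc. P b dc" by blast
  qed
  then obtain f where f: "\<And>b. b \<in> cball 0 1 \<Longrightarrow> P b (f b)" by metis
  have cover: "cball 0 1 \<subseteq> (\<Union>b\<in>cball 0 1. ball b (fst (f b)))"
  proof
    fix z :: complex assume "z \<in> cball 0 1"
    then have "z \<in> ball z (fst (f z))" using f[of z] by (simp add: P_def)
    then show "z \<in> (\<Union>b\<in>cball 0 1. ball b (fst (f b)))" using \<open>z \<in> cball 0 1\<close> by blast
  qed
  obtain B where B: "B \<subseteq> cball 0 1" "finite B" "cball 0 1 \<subseteq> (\<Union>b\<in>B. ball b (fst (f b)))"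
    using compactE_image[OF compact_cball _ cover] by blast
  have Bne: "B \<noteq> {}" using B(3) by (metis UN_empty centre_in_cball empty_iff subsetD zero_le_one)
  define A where "A = {b\<in>B. cmod b = 1}"
  define c where "c = Min ((\<lambda>b. snd (f b)) ` B)"
  have cpos: "c > 0" unfolding c_def using B Bne f by (subst Min_gr_iff) (auto simp: P_def)
  have cle: "c \<le> snd (f b)" if "b \<in> B" for b unfolding c_def using B(2) that by simp
  have "\<forall>z\<in>ball 0 1. c \<le> cmod (deriv R z) \<or> (\<exists>a\<in>A. c * cmod (z - a) \<le> cmod (deriv R z))"
  proof
    fix z :: complex assume z: "z \<in> ball 0 1"
    then obtain b where b: "b \<in> B" "z \<in> ball b (fst (f b))" using B(3) by force
    have Pb: "P b (f b)" using f B(1) b(1) by blast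
    show "c \<le> cmod (deriv R z) \<or> (\<exists>a\<in>A. c * cmod (z - a) \<le> cmod (deriv R z))"
    proof (cases "\<forall>z\<in>ball 0 1 \<inter> ball b (fst (f b)). snd (f b) \<le> cmod (deriv R z)")
      case True
      then show ?thesis using z b cle[OF b(1)] by force
    next
      case False
      then have "cmod b = 1" and h: "\<forall>z\<in>ball 0 1 \<inter> ball b (fst (f b)). snd (f b) * cmod (z - b) \<le> cmod (deriv R z)"
        using Pb unfolding P_def by auto
      then have "b \<in> A" using b by (simp add: A_def)
      moreover have "c * cmod (z - b) \<le> snd (f b) * cmod (z - b)" using cle[OF b(1)] by (intro mult_right_mono) auto
      ultimately show ?thesis using h z b by force
    qed
  qed
  moreover have "finite A" "A \<subseteq> sphere 0 1" using B by (auto simp: A_def)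
  ultimately show ?thesis using cpos by blast
qed


lemma integral_bound:
  fixes R :: "complex \<Rightarrow> complex" and A :: "complex set" and c \<tau> r :: real
  assumes Rhol: "R holomorphic_on ball 0 1" and nz: "\<forall>z\<in>ball 0 1. deriv R z \<noteq> 0"
    and A: "finite A" "A \<subseteq> sphere 0 1" and c: "c > 0"
    and bnd: "\<forall>z\<in>ball 0 1. c \<le> cmod (deriv R z) \<or> (\<exists>a\<in>A. c * cmod (z - a) \<le> cmod (deriv R z))"
    and tau: "\<tau> \<le> -2" and r: "1/2 \<le> r" "r < 1"
  shows "0 < integral {-pi..pi} (\<lambda>t. cmod (deriv R (complex_of_real r * cis t)) powr \<tau>)"
    and "integral {-pi..pi} (\<lambda>t. cmod (deriv R (complex_of_real r * cis t)) powr \<tau>)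
           \<le> (2*pi*c powr \<tau> + c powr \<tau> * real (card A) * (12*pi)) * (1-r) powr (\<tau>+1)"
proof -
  define f where "f = (\<lambda>t. cmod (deriv R (complex_of_real r * cis t)) powr \<tau>)"
  have zin: "complex_of_real r * cis t \<in> ball 0 1" for t using r by (simp add: norm_mult)
  have cd: "continuous_on (ball 0 1) (deriv R)"
    by (rule holomorphic_on_imp_continuous_on[OF holomorphic_deriv[OF Rhol open_ball]])
  have c1: "continuous_on {-pi..pi} (\<lambda>t. deriv R (complex_of_real r * cis t))"
    by (rule continuous_on_compose2[OF cd]) (use zin in \<open>auto intro!: continuous_intros\<close>)
  have fcont: "continuous_on {-pi..pi} f" unfolding f_def
    by (intro continuous_intros c1) (use nz zin in auto)
  have fint: "f integrable_on {-pi..pi}" by (rule integrable_continuous_interval[OF fcont])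
  have fpos: "f t > 0" for t unfolding f_def using nz zin[of t] by simp
  obtain t0 where t0: "t0 \<in> {-pi..pi}" "\<And>t. t \<in> {-pi..pi} \<Longrightarrow> f t0 \<le> f t"
    using continuous_attains_inf[OF compact_Icc _ fcont] pi_ge_zero by fastforce
  have "integral {-pi..pi} (\<lambda>t. f t0) \<le> integral {-pi..pi} f"
    by (rule integral_le[OF _ fint]) (use t0 in auto)
  moreover have "integral {-pi..pi} (\<lambda>t. f t0) = 2 * pi * f t0" using pi_ge_zero by simp
  moreover have "2 * pi * f t0 > 0" using fpos[of t0] pi_gt_zero by simp
  ultimately show "0 < integral {-pi..pi} (\<lambda>t. cmod (deriv R (complex_of_real r * cis t)) powr \<tau>)"
    unfolding f_def by linarith
  define h where "h = (\<lambda>a t. c powr \<tau> * cmod (complex_of_real r * cis t - a) powr \<tau>)"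
  have a1: "cmod a = 1" if "a \<in> A" for a using A that by auto
  have hint: "h a integrable_on {-pi..pi}" if "a \<in> A" for a
    unfolding h_def using integrable_cmul[OF circle_integral_powr(1)[OF r a1[OF that] tau], of "c powr \<tau>"] by simp
  have hI: "integral {-pi..pi} (h a) \<le> c powr \<tau> * (12*pi * (1-r) powr (\<tau>+1))" if "a \<in> A" for a
  proof -
    have "integral {-pi..pi} (h a) = c powr \<tau> * integral {-pi..pi} (\<lambda>t. cmod (complex_of_real r * cis t - a) powr \<tau>)"
      unfolding h_def by (rule integral_mult[OF circle_integral_powr(1)[OF r a1[OF that] tau], symmetric])
    also have "\<dots> \<le> c powr \<tau> * (12*pi * (1-r) powr (\<tau>+1))"
      by (intro mult_left_mono circle_integral_powr(2)[OF r a1[OF that] tau]) auto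
    finally show ?thesis .
  qed
  have hnn: "0 \<le> h a t" for a t by (simp add: h_def)
  define g where "g = (\<lambda>t. c powr \<tau> + (\<Sum>a\<in>A. h a t))"
  have gint: "g integrable_on {-pi..pi}" unfolding g_def
    by (intro integrable_add integrable_sum A(1) hint) auto
  have fg: "f t \<le> g t" for t
  proof -
    define z where "z = complex_of_real r * cis t"
    have zD: "z \<in> ball 0 1" using zin by (simp add: z_def)
    have xpos: "cmod (deriv R z) > 0" using nz zD by simp
    have sumnn: "0 \<le> (\<Sum>a\<in>A. h a t)" by (intro sum_nonneg hnn)
    from bnd zD consider "c \<le> cmod (deriv R z)" | a where "a \<in> A" "c * cmod (z - a) \<le> cmod (deriv R z)" by blast
    then show ?thesis
    proof cases
      case 1
      have "cmod (deriv R z) powr \<tau> \<le> c powr \<tau>" using 1 c tau by (intro powr_mono2') auto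
      then show ?thesis unfolding f_def g_def z_def[symmetric] using sumnn by linarith
    next
      case 2
      have "cmod (z - a) > 0" using zD 2(1) A(2) by auto
      then have "cmod (deriv R z) powr \<tau> \<le> (c * cmod (z - a)) powr \<tau>" using 2(2) c tau by (intro powr_mono2') auto
      also have "\<dots> = h a t" unfolding h_def z_def using c by (simp add: powr_mult)
      also have "\<dots> \<le> (\<Sum>a\<in>A. h a t)" by (rule member_le_sum[OF 2(1)]) (use hnn A(1) in auto)
      finally show ?thesis unfolding f_def g_def z_def[symmetric] using powr_ge_zero[of c \<tau>] by linarith
    qed
  qed
  have one: "1 \<le> (1-r) powr (\<tau>+1)"
  proof -
    have "1 powr (\<tau>+1) \<le> (1-r) powr (\<tau>+1)" using r tau by (intro powr_mono2') auto
    then show ?thesis by simp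
  qed
  have "integral {-pi..pi} f \<le> integral {-pi..pi} g" by (rule integral_le[OF fint gint fg])
  also have "integral {-pi..pi} g = 2*pi*c powr \<tau> + (\<Sum>a\<in>A. integral {-pi..pi} (h a))"
    unfolding g_def using pi_ge_zero
    by (subst integral_add) (auto intro!: integrable_sum A(1) hint simp: integral_sum[OF A(1) hint])
  also have "(\<Sum>a\<in>A. integral {-pi..pi} (h a)) \<le> (\<Sum>a\<in>A. c powr \<tau> * (12*pi * (1-r) powr (\<tau>+1)))"
    by (intro sum_mono hI)
  also have "\<dots> = c powr \<tau> * real (card A) * (12*pi) * (1-r) powr (\<tau>+1)" by simp
  also have "2*pi*c powr \<tau> \<le> 2*pi*c powr \<tau> * (1-r) powr (\<tau>+1)"
    using mult_left_mono[OF one, of "2*pi*c powr \<tau>"] pi_ge_zero by simp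
  finally show "integral {-pi..pi} (\<lambda>t. cmod (deriv R (complex_of_real r * cis t)) powr \<tau>)
           \<le> (2*pi*c powr \<tau> + c powr \<tau> * real (card A) * (12*pi)) * (1-r) powr (\<tau>+1)"
    unfolding f_def by (simp add: algebra_simps)
qed



lemma limsup_from_bound:
  fixes I :: "real \<Rightarrow> real" and C \<tau> :: real
  assumes C: "C > 0" and tau: "\<tau> \<le> -2"
    and bnd: "\<And>r. 1/2 \<le> r \<Longrightarrow> r < 1 \<Longrightarrow> 0 < I r \<and> I r \<le> C * (1-r) powr (\<tau>+1)"
  shows "Limsup (at_left 1) (\<lambda>r. ereal (ln (I r) / \<bar>ln (1 - r)\<bar>)) \<le> ereal (\<bar>\<tau>\<bar> - 1)"
proof (rule ereal_le_epsilon2)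
  fix e :: real assume e: "0 < e"
  define d where "d = min (1/2) (exp (- \<bar>ln C\<bar> / e))"
  have d: "0 < d" "d \<le> 1/2" "d \<le> exp (- \<bar>ln C\<bar> / e)" by (auto simp: d_def)
  have "eventually (\<lambda>r. r \<in> {1 - d<..<1}) (at_left (1::real))"
    using d by (intro eventually_at_left_real) auto
  then have "eventually (\<lambda>r. ereal (ln (I r) / \<bar>ln (1 - r)\<bar>) \<le> ereal (\<bar>\<tau>\<bar> - 1) + ereal e) (at_left 1)"
  proof (rule eventually_mono)
    fix r assume r: "r \<in> {1 - d<..<1}"
    have r1: "1/2 \<le> r" "r < 1" using r d by auto
    have Ir: "0 < I r" "I r \<le> C * (1-r) powr (\<tau>+1)" using bnd[OF r1] by auto
    define L where "L = - ln (1 - r)"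
    have "ln (1 - r) < ln (exp (- \<bar>ln C\<bar> / e))"
      using r d r1 by (subst ln_less_cancel_iff) auto
    then have L1: "\<bar>ln C\<bar> / e < L" by (simp add: L_def)
    have Lpos: "L > 0" using L1 e by (smt (verit) divide_nonneg_pos abs_ge_zero)
    have absL: "\<bar>ln (1 - r)\<bar> = L" using Lpos by (simp add: L_def)
    have "ln (I r) \<le> ln (C * (1-r) powr (\<tau>+1))" using Ir C r1 by (subst ln_le_cancel_iff) auto
    also have "\<dots> = ln C + (\<tau>+1) * ln (1 - r)" using C r1 by (simp add: ln_mult ln_powr)
    also have "\<dots> = ln C + (\<bar>\<tau>\<bar> - 1) * L" using tau by (simp add: L_def algebra_simps)
    finally have "ln (I r) / L \<le> (ln C + (\<bar>\<tau>\<bar> - 1) * L) / L" using Lpos by (intro divide_right_mono) auto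
    also have "\<dots> = ln C / L + (\<bar>\<tau>\<bar> - 1)" using Lpos by (simp add: field_simps)
    also have "ln C / L \<le> e"
    proof -
      have "\<bar>ln C\<bar> < e * L" using L1 e by (simp add: field_simps)
      then have "ln C < e * L" by linarith
      then show ?thesis using Lpos by (simp add: field_simps)
    qed
    finally show "ereal (ln (I r) / \<bar>ln (1 - r)\<bar>) \<le> ereal (\<bar>\<tau>\<bar> - 1) + ereal e"
      unfolding absL by simp
  qed
  then show "Limsup (at_left 1) (\<lambda>r. ereal (ln (I r) / \<bar>ln (1 - r)\<bar>)) \<le> ereal (\<bar>\<tau>\<bar> - 1) + ereal e"
    by (rule Limsup_bounded)
qed

lemma part1:
  fixes R :: "complex \<Rightarrow> complex" and \<tau> :: real
  assumes R: "R \<in> univalent_rational" and tau: "\<tau> \<le> -2"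
  shows "integral_means_spectrum R \<tau> \<le> ereal (\<bar>\<tau>\<bar> - 1)"
proof -
  obtain p q :: "complex poly" where qnz: "\<forall>z\<in>ball 0 1. poly q z \<noteq> 0" and Rdef: "R = (\<lambda>z. poly p z / poly q z)"
    and inj: "inj_on R (ball 0 1)" and d0: "deriv R 0 = 1"
    using R unfolding univalent_rational_def by blast
  have Rhol: "R holomorphic_on ball 0 1" unfolding Rdef by (intro holomorphic_intros) (use qnz in auto)
  have nz: "\<forall>z\<in>ball 0 1. deriv R z \<noteq> 0"
    using holomorphic_injective_imp_regular[OF Rhol open_ball inj] by blast
  obtain A c where A: "finite A" "A \<subseteq> sphere 0 1" and c: "c > 0"
    and bnd: "\<forall>z\<in>ball 0 1. c \<le> cmod (deriv R z) \<or> (\<exists>a\<in>A. c * cmod (z - a) \<le> cmod (deriv R z))"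
    using global_bound[OF qnz Rdef inj d0] by blast
  define C where "C = 2*pi*c powr \<tau> + c powr \<tau> * real (card A) * (12*pi)"
  have C: "C > 0" unfolding C_def using c by (intro add_pos_nonneg) auto
  show ?thesis unfolding integral_means_spectrum_def
    by (rule limsup_from_bound[OF C tau])
       (use integral_bound[OF Rhol nz A c bnd tau] in \<open>auto simp: C_def\<close>)
qed


definition Rwit :: "complex \<Rightarrow> complex" where
  "Rwit = (\<lambda>z. poly [:0, 1, -1/2:] z / poly 1 z)"

lemma Rwit_eq: "Rwit = (\<lambda>z. z - z\<^sup>2 / 2)"
  unfolding Rwit_def by (auto simp: power2_eq_square algebra_simps)

lemma deriv_Rwit: "deriv Rwit z = 1 - z"
proof -
  have "((\<lambda>z. z - z\<^sup>2 / 2) has_field_derivative (1 - of_nat 2 * z ^ (2 - 1) / 2)) (at z)"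
    by (auto intro!: derivative_eq_intros)
  then have "((\<lambda>z. z - z\<^sup>2 / 2) has_field_derivative (1 - z)) (at z)" by simp
  then show ?thesis unfolding Rwit_eq by (rule DERIV_imp_deriv)
qed

lemma Rwit_in: "Rwit \<in> univalent_rational"
proof -
  have inj: "inj_on Rwit (ball 0 1)"
  proof (rule inj_onI)
    fix z w :: complex assume z: "z \<in> ball 0 1" and w: "w \<in> ball 0 1" and eq: "Rwit z = Rwit w"
    have e2: "z - z\<^sup>2 / 2 = w - w\<^sup>2 / 2" using eq unfolding Rwit_eq by simp
    have "(z - w) * (2 - (z + w)) = 2 * ((z - z\<^sup>2 / 2) - (w - w\<^sup>2 / 2))"
      by (simp add: power2_eq_square field_simps)
    then have "(z - w) * (2 - (z + w)) = 0" using e2 by simp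
    moreover have "z + w \<noteq> 2"
    proof
      assume "z + w = 2"
      then have "2 \<le> cmod z + cmod w" using norm_triangle_ineq[of z w] by simp
      then show False using z w by simp
    qed
    ultimately show "z = w" by auto
  qed
  have "Rwit 0 = 0" unfolding Rwit_eq by simp
  moreover have "deriv Rwit 0 = 1" by (simp add: deriv_Rwit)
  moreover have "\<exists>p q :: complex poly. (\<forall>z\<in>ball 0 1. poly q z \<noteq> 0) \<and> Rwit = (\<lambda>z. poly p z / poly q z)"
    by (rule exI[of _ "[:0, 1, -1/2:]"], rule exI[of _ 1]) (simp add: Rwit_def)
  ultimately show ?thesis using inj unfolding univalent_rational_def by blast
qed

lemma Rwit_integral_lower:
  fixes r :: real assumes r: "0 < r" "r < 1"
  shows "1 / (1 - r) \<le> integral {-pi..pi} (\<lambda>t. cmod (deriv Rwit (complex_of_real r * cis t)) powr (-2))"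
proof -
  define e where "e = 1 - r"
  have e: "0 < e" "e < 1" using r by (auto simp: e_def)
  define f where "f = (\<lambda>t. cmod (deriv Rwit (complex_of_real r * cis t)) powr (-2))"
  have dz: "deriv Rwit (complex_of_real r * cis t) = - (complex_of_real r * cis t - cis 0)" for t
    by (simp add: deriv_Rwit)
  have nrm: "(cmod (deriv Rwit (complex_of_real r * cis t)))\<^sup>2 = e\<^sup>2 + 2*r*(1 - cos t)" for t
    unfolding dz norm_minus_cancel cmod_rcis_diff_sq e_def by simp
  have pos: "cmod (deriv Rwit (complex_of_real r * cis t)) > 0" for t
  proof -
    have "0 < e\<^sup>2 + 2*r*(1 - cos t)" using e r by (intro add_pos_nonneg) auto
    then have "(cmod (deriv Rwit (complex_of_real r * cis t)))\<^sup>2 > 0" using nrm by simp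
    then show ?thesis by (simp add: zero_less_power2)
  qed
  have fsq: "f t = 1 / (e\<^sup>2 + 2*r*(1 - cos t))" for t
    using pos[of t] nrm[of t] unfolding f_def by (simp add: powr_minus powr_numeral divide_inverse)
  have fcont: "continuous_on UNIV f"
  proof -
    have "continuous_on UNIV (\<lambda>t. 1 / (e\<^sup>2 + 2*r*(1 - cos t)))"
    proof (intro continuous_intros ballI)
      fix t :: real show "e\<^sup>2 + 2*r*(1 - cos t) \<noteq> 0" using e r by (smt (verit) cos_le_one mult_nonneg_nonneg zero_less_power2)
    qed
    then show ?thesis using fsq by simp
  qed
  have fint: "f integrable_on {a..b}" for a b
    by (rule integrable_continuous_interval) (rule continuous_on_subset[OF fcont], simp)
  have fnn: "0 \<le> f t" for t unfolding f_def by simp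
  have sub: "{-e..e} \<subseteq> {-pi..pi}" using e pi_gt3 by auto
  have "integral {-e..e} (\<lambda>t. 1 / (2 * e\<^sup>2)) \<le> integral {-e..e} f"
  proof (rule integral_le[OF _ fint])
    show "(\<lambda>t. 1 / (2 * e\<^sup>2)) integrable_on {-e..e}" by (rule integrable_continuous_interval) simp
    fix t assume t: "t \<in> {-e..e}"
    have "1 - cos t \<le> t\<^sup>2 / 2" by (rule one_minus_cos_le)
    moreover have "t\<^sup>2 \<le> e\<^sup>2" using t abs_le_square_iff[of t e] e by auto
    moreover have "0 \<le> 1 - cos t" by simp
    ultimately have "2*r*(1 - cos t) \<le> e\<^sup>2"
    proof -
      assume a: "1 - cos t \<le> t\<^sup>2 / 2" "t\<^sup>2 \<le> e\<^sup>2" "0 \<le> 1 - cos t"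
      have "2*r*(1 - cos t) \<le> 2*1*(1 - cos t)" using r a(3) by (intro mult_right_mono) auto
      moreover have "2*1*(1 - cos t) \<le> e\<^sup>2" using a(1,2) by simp
      ultimately show ?thesis by (rule order_trans)
    qed
    then have "e\<^sup>2 + 2*r*(1 - cos t) \<le> 2 * e\<^sup>2" by simp
    moreover have "0 < e\<^sup>2 + 2*r*(1 - cos t)" using e r by (intro add_pos_nonneg) auto
    ultimately show "1 / (2 * e\<^sup>2) \<le> f t" unfolding fsq using e by (intro divide_left_mono) (auto intro!: mult_pos_pos)
  qed
  moreover have "integral {-e..e} (\<lambda>t. 1 / (2 * e\<^sup>2)) = 1 / e"
    using e by (simp add: power2_eq_square field_simps)
  moreover have "integral {-e..e} f \<le> integral {-pi..pi} f"
    by (rule integral_subset_le[OF sub fint fint]) (simp add: fnn)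
  ultimately show ?thesis unfolding f_def e_def by linarith
qed

lemma Rwit_spectrum: "1 \<le> integral_means_spectrum Rwit (-2)"
  unfolding integral_means_spectrum_def
proof (rule le_Limsup)
  show "at_left (1::real) \<noteq> bot" by simp
  have "eventually (\<lambda>r. r \<in> {0<..<1}) (at_left (1::real))" by (intro eventually_at_left_real) simp
  then show "\<forall>\<^sub>F r in at_left 1. 1 \<le> ereal (ln (integral {-pi..pi} (\<lambda>t. cmod (deriv Rwit (complex_of_real r * cis t)) powr (-2))) / \<bar>ln (1 - r)\<bar>)"
  proof (rule eventually_mono)
    fix r :: real assume r: "r \<in> {0<..<1}"
    define I where "I = integral {-pi..pi} (\<lambda>t. cmod (deriv Rwit (complex_of_real r * cis t)) powr (-2))"
    have I: "1 / (1 - r) \<le> I" using Rwit_integral_lower[of r] r by (simp add: I_def)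
    have lpos: "ln (1 - r) < 0" using r by simp
    have "0 < 1 / (1 - r)" using r by simp
    then have Ipos: "0 < I" using I by linarith
    have "- ln (1 - r) = ln (1 / (1 - r))" using r by (simp add: ln_div)
    also have "\<dots> \<le> ln I" using I r Ipos by (subst ln_le_cancel_iff) auto
    finally have "\<bar>ln (1 - r)\<bar> \<le> ln I" using lpos by simp
    moreover have "\<bar>ln (1 - r)\<bar> > 0" using lpos by simp
    ultimately have "1 \<le> ln I / \<bar>ln (1 - r)\<bar>" by (simp add: le_divide_eq_1_pos)
    then show "1 \<le> ereal (ln I / \<bar>ln (1 - r)\<bar>)" by simp
  qed
qed


theorem mainTheorem6:
  shows "(\<forall>R\<in>univalent_rational. \<forall>\<tau>::real. \<tau> \<le> -2 \<longrightarrow>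
            integral_means_spectrum R \<tau> \<le> ereal (\<bar>\<tau>\<bar> - 1))
       \<and> (\<forall>R\<in>univalent_rational. integral_means_spectrum R (-2) \<le> 1)
       \<and> (SUP R\<in>univalent_rational. integral_means_spectrum R (-2)) = 1"
proof -
  have p1: "\<forall>R\<in>univalent_rational. \<forall>\<tau>::real. \<tau> \<le> -2 \<longrightarrow>
            integral_means_spectrum R \<tau> \<le> ereal (\<bar>\<tau>\<bar> - 1)"
    using part1 by blast
  have p2: "\<forall>R\<in>univalent_rational. integral_means_spectrum R (-2) \<le> 1"
  proof
    fix R assume "R \<in> univalent_rational"
    from part1[OF this, of "-2"] show "integral_means_spectrum R (-2) \<le> 1" by (simp add: one_ereal_def)
  qed
  have p3: "(SUP R\<in>univalent_rational. integral_means_spectrum R (-2)) = 1"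
  proof (rule antisym)
    show "(SUP R\<in>univalent_rational. integral_means_spectrum R (-2)) \<le> 1"
      using p2 by (intro SUP_least) auto
    show "1 \<le> (SUP R\<in>univalent_rational. integral_means_spectrum R (-2))"
    proof -
      have "integral_means_spectrum Rwit (-2) \<le> (SUP R\<in>univalent_rational. integral_means_spectrum R (-2))"
        using Rwit_in by (rule SUP_upper)
      then show ?thesis using Rwit_spectrum by (rule order_trans[rotated])
    qed
  qed
  show ?thesis using p1 p2 p3 by blast
qed

end
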